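(* Fix $s\in\mathbb N$ with $s\ge2$, $q\in\mathbb N\cup\{0\}$, and indices $\alpha_1,\dots,\alpha_q\in\{1,\dots,s\}$ (not necessarily distinct). For $\eta\in\mathbb N$ with $\eta\ge s$ and distinct reals $w_1,\dots,w_s$, $$\sum_{\substack{x_1+\dots+x_s=\eta\\ x_1,\dots,x_s\ge 1}} x_{\alpha_1}\cdots x_{\alpha_q}\, w_1^{x_1}\cdots w_s^{x_s}=\frac{\sum_{l=1}^s w_l^{\eta+2-s}f_{l,\eta}(w_1,\dots,w_s)}{\left(\prod_{1\le i<j\le s}(w_i-w_j)\right)^{2^q}},$$ where each $f_{l,\eta}\in\mathbb R[\eta][w_1,\dots,w_s]$ is homogeneous in $w_1,\dots,w_s$ of degree $2^q\binom{s}{2}+s-2$, and its coefficients are polynomials in $\eta$ of degree at most $q$.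
   Context: The sum runs over integer tuples $(x_1,\dots,x_s)$. *)

theory Defs
  imports Complex_Main "HOL-Computational_Algebra.Polynomial"
begin

definition comp_tuples :: "nat \<Rightarrow> nat \<Rightarrow> (nat \<Rightarrow> nat) set" where
  "comp_tuples s eta = {x. (\<forall>i\<in>{1..s}. 1 \<le> x i) \<and> (\<forall>i. i \<notin> {1..s} \<longrightarrow> x i = 0)
                          \<and> (\<Sum>i=1..s. x i) = eta}"

definition monomial_exps :: "nat \<Rightarrow> nat \<Rightarrow> (nat \<Rightarrow> nat) set" where
  "monomial_exps s d = {m. (\<forall>i. i \<notin> {1..s} \<longrightarrow> m i = 0) \<and> (\<Sum>i=1..s. m i) = d}"

definition hom_poly_eval :: "nat \<Rightarrow> nat \<Rightarrow> ((nat \<Rightarrow> nat) \<Rightarrow> real poly) \<Rightarrow> real \<Rightarrow> (nat \<Rightarrow> real) \<Rightarrow> real" where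
  "hom_poly_eval s d c eta w = (\<Sum>m\<in>monomial_exps s d. poly (c m) eta * (\<Prod>i=1..s. w i ^ m i))"

end

theory Submission
  imports Defs
begin


definition HP :: "nat \<Rightarrow> nat \<Rightarrow> nat \<Rightarrow> (real \<Rightarrow> (nat \<Rightarrow> real) \<Rightarrow> real) \<Rightarrow> bool" where
  "HP s d q F \<longleftrightarrow> (\<exists>c. (\<forall>m. degree (c m) \<le> q) \<and> (\<forall>\<eta> w. F \<eta> w = hom_poly_eval s d c \<eta> w))"

lemma finite_monomial_exps: "finite (monomial_exps s d)"
proof -
  have "monomial_exps s d \<subseteq> {m. \<forall>x. (x \<in> {1..s} \<longrightarrow> m x \<in> {0..d}) \<and> (x \<notin> {1..s} \<longrightarrow> m x = 0)}"
  proof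
    fix m assume m: "m \<in> monomial_exps s d"
    have "\<forall>x\<in>{1..s}. m x \<le> d"
      using m unfolding monomial_exps_def
      by (metis (mono_tags, lifting) finite_atLeastAtMost mem_Collect_eq member_le_sum zero_le)
    thus "m \<in> {m. \<forall>x. (x \<in> {1..s} \<longrightarrow> m x \<in> {0..d}) \<and> (x \<notin> {1..s} \<longrightarrow> m x = 0)}"
      using m unfolding monomial_exps_def by auto
  qed
  thus ?thesis using finite_subset finite_set_of_finite_funs[of "{1..s}" "{0..d}" 0] by blast
qed

lemma HP_cong: "HP s d q F \<Longrightarrow> d = d' \<Longrightarrow> q \<le> q' \<Longrightarrow> HP s d' q' F"
  unfolding HP_def by (meson order_trans)

lemma HP_ext: "HP s d q F \<Longrightarrow> (\<And>\<eta> w. G \<eta> w = F \<eta> w) \<Longrightarrow> HP s d q G"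
  unfolding HP_def by auto

lemma HP_add:
  assumes "HP s d q F" "HP s d q G"
  shows "HP s d q (\<lambda>\<eta> w. F \<eta> w + G \<eta> w)"
proof -
  obtain c1 where c1: "\<forall>m. degree (c1 m) \<le> q" "\<forall>\<eta> w. F \<eta> w = hom_poly_eval s d c1 \<eta> w"
    using assms(1) unfolding HP_def by blast
  obtain c2 where c2: "\<forall>m. degree (c2 m) \<le> q" "\<forall>\<eta> w. G \<eta> w = hom_poly_eval s d c2 \<eta> w"
    using assms(2) unfolding HP_def by blast
  show ?thesis unfolding HP_def
    apply (rule exI[of _ "\<lambda>m. c1 m + c2 m"])
    using c1 c2 by (auto simp: hom_poly_eval_def degree_add_le sum.distrib[symmetric] distrib_right)
qed

lemma ME0: "monomial_exps s 0 = {\<lambda>_. 0}"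
proof (intro set_eqI iffI)
  fix m assume "m \<in> monomial_exps s 0"
  hence a: "\<forall>i. i \<notin> {1..s} \<longrightarrow> m i = 0" and b: "(\<Sum>i=1..s. m i) = 0" unfolding monomial_exps_def by auto
  from b have "\<forall>i\<in>{1..s}. m i = 0" by simp
  with a have "\<forall>i. m i = 0" by blast
  thus "m \<in> {\<lambda>_. 0}" by auto
next
  fix m :: "nat \<Rightarrow> nat" assume "m \<in> {\<lambda>_. 0}"
  thus "m \<in> monomial_exps s 0" unfolding monomial_exps_def by simp
qed

lemma HP_poly: "HP s 0 (degree p) (\<lambda>\<eta> w. poly p \<eta>)"
  unfolding HP_def
  by (rule exI[of _ "\<lambda>m. if m = (\<lambda>_. 0) then p else 0"]) (simp add: hom_poly_eval_def ME0)

lemma HP_const: "HP s 0 0 (\<lambda>\<eta> w. r)"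
  using HP_poly[of s "[:r:]"] by simp

lemma HP_zero: "HP s d q (\<lambda>\<eta> w. 0)"
  unfolding HP_def by (rule exI[of _ "\<lambda>m. 0"]) (simp add: hom_poly_eval_def)

lemma HP_var:
  assumes "i \<in> {1..s}"
  shows "HP s 1 0 (\<lambda>\<eta> w. w i)"
proof -
  define m0 where "m0 = (\<lambda>j::nat. if j = i then 1 else (0::nat))"
  have m0: "m0 \<in> monomial_exps s 1"
    using assms unfolding monomial_exps_def m0_def by (auto simp: sum.delta)
  have pr: "\<And>w::nat\<Rightarrow>real. (\<Prod>j=1..s. w j ^ m0 j) = w i"
  proof -
    fix w :: "nat \<Rightarrow> real"
    have "(\<Prod>j=1..s. w j ^ m0 j) = (\<Prod>j=1..s. if j = i then w j else 1)"
      by (rule prod.cong) (auto simp: m0_def)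
    also have "\<dots> = w i" using assms by simp
    finally show "(\<Prod>j=1..s. w j ^ m0 j) = w i" .
  qed
  show ?thesis unfolding HP_def
    apply (rule exI[of _ "\<lambda>m. if m = m0 then 1 else 0"])
  proof (intro conjI allI)
    fix \<eta> w
    have "hom_poly_eval s 1 (\<lambda>m. if m = m0 then 1 else 0) \<eta> w
       = (\<Sum>m\<in>monomial_exps s 1. if m = m0 then (\<Prod>j=1..s. w j ^ m j) else 0)"
      unfolding hom_poly_eval_def by (rule sum.cong) auto
    also have "\<dots> = w i" using m0 pr finite_monomial_exps by simp
    finally show "w i = hom_poly_eval s 1 (\<lambda>m. if m = m0 then 1 else 0) \<eta> w" by simp
  qed auto
qed



lemma HP_mult:
  assumes "HP s d1 q1 F" "HP s d2 q2 G"
  shows "HP s (d1+d2) (q1+q2) (\<lambda>\<eta> w. F \<eta> w * G \<eta> w)"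
proof -
  obtain c1 where c1: "\<forall>m. degree (c1 m) \<le> q1" "\<forall>\<eta> w. F \<eta> w = hom_poly_eval s d1 c1 \<eta> w"
    using assms(1) unfolding HP_def by blast
  obtain c2 where c2: "\<forall>m. degree (c2 m) \<le> q2" "\<forall>\<eta> w. G \<eta> w = hom_poly_eval s d2 c2 \<eta> w"
    using assms(2) unfolding HP_def by blast
  define S where "S = monomial_exps s d1 \<times> monomial_exps s d2"
  define g where "g = (\<lambda>p::(nat\<Rightarrow>nat)\<times>(nat\<Rightarrow>nat). (\<lambda>i. fst p i + snd p i))"
  define c where "c = (\<lambda>m. \<Sum>p\<in>{p \<in> S. g p = m}. c1 (fst p) * c2 (snd p))"
  have fS: "finite S" unfolding S_def using finite_monomial_exps by simp
  have gS: "g ` S \<subseteq> monomial_exps s (d1+d2)"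
    unfolding S_def g_def monomial_exps_def by (auto simp: sum.distrib)
  have deg: "\<forall>m. degree (c m) \<le> q1 + q2"
  proof
    fix m
    show "degree (c m) \<le> q1 + q2" unfolding c_def
      apply (rule degree_sum_le)
      using fS apply simp
      using c1(1) c2(1) by (meson add_mono degree_mult_le order_trans)
  qed
  have eq: "F \<eta> w * G \<eta> w = hom_poly_eval s (d1+d2) c \<eta> w" for \<eta> w
  proof -
    define h where "h = (\<lambda>p::(nat\<Rightarrow>nat)\<times>(nat\<Rightarrow>nat). poly (c1 (fst p)) \<eta> * poly (c2 (snd p)) \<eta> * (\<Prod>i=1..s. w i ^ g p i))"
    have "F \<eta> w * G \<eta> w = (\<Sum>m1\<in>monomial_exps s d1. \<Sum>m2\<in>monomial_exps s d2.
            (poly (c1 m1) \<eta> * (\<Prod>i=1..s. w i ^ m1 i)) * (poly (c2 m2) \<eta> * (\<Prod>i=1..s. w i ^ m2 i)))"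
      using c1(2) c2(2) unfolding hom_poly_eval_def by (simp add: sum_product)
    also have "\<dots> = (\<Sum>m1\<in>monomial_exps s d1. \<Sum>m2\<in>monomial_exps s d2. h (m1, m2))"
      unfolding h_def g_def by (simp add: power_add prod.distrib mult_ac)
    also have "\<dots> = sum h S" unfolding S_def by (simp add: sum.cartesian_product)
    also have "\<dots> = (\<Sum>m\<in>monomial_exps s (d1+d2). sum h {p \<in> S. g p = m})"
      using sum.group[OF fS finite_monomial_exps gS, of h] by simp
    also have "\<dots> = hom_poly_eval s (d1+d2) c \<eta> w"
      unfolding hom_poly_eval_def
    proof (rule sum.cong[OF refl])
      fix m
      have "poly (c m) \<eta> * (\<Prod>i=1..s. w i ^ m i)
          = (\<Sum>p\<in>{p \<in> S. g p = m}. poly (c1 (fst p)) \<eta> * poly (c2 (snd p)) \<eta> * (\<Prod>i=1..s. w i ^ m i))"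
        unfolding c_def by (simp add: poly_sum sum_distrib_right)
      also have "\<dots> = sum h {p \<in> S. g p = m}"
        unfolding h_def by (rule sum.cong) auto
      finally show "sum h {p \<in> S. g p = m} = poly (c m) \<eta> * (\<Prod>i=1..s. w i ^ m i)" by simp
    qed
    finally show ?thesis .
  qed
  show ?thesis unfolding HP_def using deg eq by blast
qed

lemma HP_prod:
  assumes "finite I" "\<And>i. i \<in> I \<Longrightarrow> HP s (d i) (q i) (f i)"
  shows "HP s (\<Sum>i\<in>I. d i) (\<Sum>i\<in>I. q i) (\<lambda>\<eta> w. \<Prod>i\<in>I. f i \<eta> w)"
  using assms
proof (induction I rule: finite_induct)
  case empty
  then show ?case using HP_const[of s 1] by simp
next
  case (insert x F)
  have "HP s (d x + (\<Sum>i\<in>F. d i)) (q x + (\<Sum>i\<in>F. q i)) (\<lambda>\<eta> w. f x \<eta> w * (\<Prod>i\<in>F. f i \<eta> w))"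
    using insert by (intro HP_mult) auto
  then show ?case using insert by simp
qed

lemma HP_power:
  assumes "HP s d q F"
  shows "HP s (n*d) (n*q) (\<lambda>\<eta> w. F \<eta> w ^ n)"
  using HP_prod[of "{..<n}" s "\<lambda>_. d" "\<lambda>_. q" "\<lambda>_. F"] assms by simp

lemma HP_minus:
  assumes "HP s d q F" "HP s d q G"
  shows "HP s d q (\<lambda>\<eta> w. F \<eta> w - G \<eta> w)"
proof -
  have "HP s (0+d) (0+q) (\<lambda>\<eta> w. (-1) * G \<eta> w)" by (intro HP_mult HP_const assms)
  hence "HP s d q (\<lambda>\<eta> w. F \<eta> w + (-1) * G \<eta> w)" using assms(1) by (intro HP_add) auto
  thus ?thesis by (rule HP_ext) simp
qed



definition Eul :: "(real \<Rightarrow> real) \<Rightarrow> real \<Rightarrow> real \<Rightarrow> bool" where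
  "Eul f t V \<longleftrightarrow> (\<exists>F'. (f has_field_derivative F') (at t) \<and> t * F' = V)"

lemma Eul_const: "Eul (\<lambda>x. c) t 0"
  unfolding Eul_def by (rule exI[of _ 0]) (auto intro: derivative_eq_intros)

lemma Eul_add: "Eul f t A \<Longrightarrow> Eul g t B \<Longrightarrow> Eul (\<lambda>x. f x + g x) t (A + B)"
  unfolding Eul_def by (auto intro!: derivative_eq_intros simp: distrib_left)

lemma Eul_mult: "Eul f t A \<Longrightarrow> Eul g t B \<Longrightarrow> Eul (\<lambda>x. f x * g x) t (A * g t + f t * B)"
  unfolding Eul_def
  apply clarify
  subgoal for F' G'
    by (rule exI[of _ "F' * g t + f t * G'"]) (auto intro!: derivative_eq_intros simp: algebra_simps)
  done

lemma Eul_sum: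
  assumes "finite I" "\<And>i. i \<in> I \<Longrightarrow> Eul (f i) t (A i)"
  shows "Eul (\<lambda>x. \<Sum>i\<in>I. f i x) t (\<Sum>i\<in>I. A i)"
  using assms
proof (induction I rule: finite_induct)
  case empty
  then show ?case using Eul_const[of 0 t] by simp
next
  case (insert x F)
  then show ?case using Eul_add[of "f x" t "A x" "\<lambda>y. \<Sum>i\<in>F. f i y"] by simp
qed

lemma Eul_power: "Eul f t A \<Longrightarrow> Eul (\<lambda>x. f x ^ n) t (of_nat n * f t ^ (n - 1) * A)"
  unfolding Eul_def
  apply clarify
  subgoal for F'
    by (rule exI[of _ "of_nat n * (F' * f t ^ (n - Suc 0))"]) (auto intro!: derivative_eq_intros simp: algebra_simps)
  done

lemma Eul_divide: "Eul f t A \<Longrightarrow> Eul g t B \<Longrightarrow> g t \<noteq> 0 \<Longrightarrow>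
   Eul (\<lambda>x. f x / g x) t ((A * g t - f t * B) / (g t * g t))"
  unfolding Eul_def
  apply clarify
  subgoal for F' G'
    by (rule exI[of _ "(F' * g t - f t * G') / (g t * g t)"]) (auto intro!: derivative_eq_intros simp: algebra_simps diff_divide_distrib)
  done

lemma Eul_id_pow: "Eul (\<lambda>x. x ^ n) t (of_nat n * t ^ n)"
  unfolding Eul_def
proof (rule exI[of _ "of_nat n * t ^ (n - 1)"], intro conjI)
  show "((\<lambda>x. x ^ n) has_field_derivative of_nat n * t ^ (n - 1)) (at t)"
    using DERIV_pow[of n t UNIV] by simp
  show "t * (of_nat n * t ^ (n - 1)) = of_nat n * t ^ n"
    by (cases n) auto
qed

lemma Eul_cong: "Eul f t A \<Longrightarrow> (\<And>x. f x = g x) \<Longrightarrow> A = B \<Longrightarrow> Eul g t B"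
proof -
  assume "Eul f t A" "\<And>x. f x = g x" "A = B"
  moreover have "f = g" using \<open>\<And>x. f x = g x\<close> by auto
  ultimately show ?thesis by simp
qed

lemma Eul_unique:
  assumes "Eul f t A" "Eul g t B" "open U" "t \<in> U" "\<And>x. x \<in> U \<Longrightarrow> f x = g x"
  shows "A = B"
proof -
  obtain F' where F: "(f has_field_derivative F') (at t)" "t * F' = A" using assms(1) unfolding Eul_def by blast
  obtain G' where G: "(g has_field_derivative G') (at t)" "t * G' = B" using assms(2) unfolding Eul_def by blast
  have "(g has_field_derivative F') (at t)"
    by (rule has_field_derivative_transform_within_open[OF F(1) assms(3,4)]) (use assms(5) in auto)
  hence "F' = G'" using G(1) DERIV_unique by blast
  thus ?thesis using F G by simp
qed

lemma prod_upd:
  fixes s a :: nat and w :: "nat \<Rightarrow> real"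
  assumes "a \<in> {1..s}"
  shows "(\<Prod>i=1..s. (w(a:=t)) i ^ m i) = t ^ m a * (\<Prod>i\<in>{1..s}-{a}. w i ^ m i)"
proof -
  have "(\<Prod>i=1..s. (w(a:=t)) i ^ m i) = (w(a:=t)) a ^ m a * (\<Prod>i\<in>{1..s}-{a}. (w(a:=t)) i ^ m i)"
    by (rule prod.remove) (use assms in auto)
  also have "(\<Prod>i\<in>{1..s}-{a}. (w(a:=t)) i ^ m i) = (\<Prod>i\<in>{1..s}-{a}. w i ^ m i)"
    by (rule prod.cong) auto
  finally show ?thesis by simp
qed

lemma Eul_monosum:
  fixes s a :: nat and w :: "nat \<Rightarrow> real" and M :: "(nat \<Rightarrow> nat) set" and k :: "(nat \<Rightarrow> nat) \<Rightarrow> real"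
  assumes "finite M" "a \<in> {1..s}"
  shows "Eul (\<lambda>t. \<Sum>m\<in>M. k m * (\<Prod>i=1..s. (w(a:=t)) i ^ m i)) t
             (\<Sum>m\<in>M. k m * real (m a) * (\<Prod>i=1..s. (w(a:=t)) i ^ m i))"
proof -
  have "Eul (\<lambda>t. \<Sum>m\<in>M. k m * (t ^ m a * (\<Prod>i\<in>{1..s}-{a}. w i ^ m i))) t
          (\<Sum>m\<in>M. k m * real (m a) * (t ^ m a * (\<Prod>i\<in>{1..s}-{a}. w i ^ m i)))"
  proof (rule Eul_sum[OF assms(1)])
    fix m
    have "Eul (\<lambda>x. k m * (x ^ m a * (\<Prod>i\<in>{1..s}-{a}. w i ^ m i))) t
         (0 * (t ^ m a * (\<Prod>i\<in>{1..s}-{a}. w i ^ m i)) + k m * ((of_nat (m a) * t ^ m a) * (\<Prod>i\<in>{1..s}-{a}. w i ^ m i) + t ^ m a * 0))"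
      by (intro Eul_mult Eul_const Eul_id_pow)
    thus "Eul (\<lambda>x. k m * (x ^ m a * (\<Prod>i\<in>{1..s}-{a}. w i ^ m i))) t
          (k m * real (m a) * (t ^ m a * (\<Prod>i\<in>{1..s}-{a}. w i ^ m i)))"
      by (simp add: mult_ac)
  qed
  thus ?thesis using prod_upd[OF assms(2)] by simp
qed

lemma Eul_hpe:
  assumes "a \<in> {1..s}"
  shows "Eul (\<lambda>t. hom_poly_eval s d c \<eta> (w(a:=t))) t
             (hom_poly_eval s d (\<lambda>m. smult (real (m a)) (c m)) \<eta> (w(a:=t)))"
  unfolding hom_poly_eval_def
  using Eul_monosum[OF finite_monomial_exps assms, where k="\<lambda>m. poly (c m) \<eta>" and w=w and t=t]
  by (simp add: mult_ac)

lemma HP_Euler: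
  assumes "a \<in> {1..s}" "HP s d q F"
  shows "\<exists>G. HP s d q G \<and> (\<forall>\<eta> w t. Eul (\<lambda>t. F \<eta> (w(a:=t))) t (G \<eta> (w(a:=t))))"
proof -
  obtain c where c: "\<forall>m. degree (c m) \<le> q" "\<forall>\<eta> w. F \<eta> w = hom_poly_eval s d c \<eta> w"
    using assms(2) unfolding HP_def by blast
  let ?G = "\<lambda>\<eta> w. hom_poly_eval s d (\<lambda>m. smult (real (m a)) (c m)) \<eta> w"
  have "\<forall>m. degree (smult (real (m a)) (c m)) \<le> q"
    using c(1) by (meson degree_smult_le order_trans)
  hence "HP s d q ?G" unfolding HP_def
    by (intro exI[of _ "\<lambda>m. smult (real (m a)) (c m)"]) simp
  moreover have "Eul (\<lambda>t. F \<eta> (w(a:=t))) t (?G \<eta> (w(a:=t)))" for \<eta> w t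
    apply (rule Eul_cong[OF Eul_hpe[OF assms(1), of d c \<eta> w t]])
    using c(2) by metis+
  ultimately show ?thesis by blast
qed



definition ftup :: "nat set \<Rightarrow> nat \<Rightarrow> (nat \<Rightarrow> nat) set" where
  "ftup S n = {x. (\<forall>i. i \<notin> S \<longrightarrow> x i = 0) \<and> (\<Sum>i\<in>S. x i) = n}"

definition HS :: "nat set \<Rightarrow> nat \<Rightarrow> (nat \<Rightarrow> real) \<Rightarrow> real" where
  "HS S n w = (\<Sum>x\<in>ftup S n. \<Prod>i\<in>S. w i ^ x i)"

definition GS :: "nat set \<Rightarrow> nat \<Rightarrow> (nat \<Rightarrow> real) \<Rightarrow> real" where
  "GS S k w = (\<Sum>l\<in>S. w l ^ k / (\<Prod>j\<in>S-{l}. (w l - w j)))"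

lemma finite_ftup:
  assumes "finite S" shows "finite (ftup S n)"
proof -
  have "ftup S n \<subseteq> {m. \<forall>x. (x \<in> S \<longrightarrow> m x \<in> {0..n}) \<and> (x \<notin> S \<longrightarrow> m x = 0)}"
  proof
    fix m assume m: "m \<in> ftup S n"
    have "\<forall>x\<in>S. m x \<le> n"
      using m assms unfolding ftup_def
      by (metis (mono_tags, lifting) mem_Collect_eq member_le_sum zero_le)
    thus "m \<in> {m. \<forall>x. (x \<in> S \<longrightarrow> m x \<in> {0..n}) \<and> (x \<notin> S \<longrightarrow> m x = 0)}"
      using m unfolding ftup_def by auto
  qed
  thus ?thesis using finite_subset finite_set_of_finite_funs[of S "{0..n}" 0] assms by blast
qed

lemma ftup_zero:
  assumes "finite S" shows "ftup S 0 = {\<lambda>_. 0}"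
proof (intro set_eqI iffI)
  fix m assume "m \<in> ftup S 0"
  hence a: "\<forall>i. i \<notin> S \<longrightarrow> m i = 0" and b: "(\<Sum>i\<in>S. m i) = 0" unfolding ftup_def by auto
  from b assms have "\<forall>i\<in>S. m i = 0" by simp
  with a have "\<forall>i. m i = 0" by blast
  thus "m \<in> {\<lambda>_. 0}" by auto
next
  fix m :: "nat \<Rightarrow> nat" assume "m \<in> {\<lambda>_. 0}"
  thus "m \<in> ftup S 0" unfolding ftup_def by simp
qed

lemma HS_zero: "finite S \<Longrightarrow> HS S 0 w = 1"
  unfolding HS_def by (simp add: ftup_zero)

lemma HS_empty_Suc: "HS {} (Suc n) w = 0"
proof -
  have "ftup {} (Suc n) = {}" unfolding ftup_def by auto
  thus ?thesis unfolding HS_def by simp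
qed

lemma HS_rec:
  assumes fU: "finite U" and aU: "a \<notin> U"
  shows "HS (insert a U) (Suc n) w = HS U (Suc n) w + w a * HS (insert a U) n w"
proof -
  let ?X = "ftup (insert a U) (Suc n)"
  let ?f = "\<lambda>x. \<Prod>i\<in>insert a U. w i ^ x i"
  have fX: "finite ?X" using fU by (simp add: finite_ftup)
  have split: "sum ?f ?X = sum ?f (?X \<inter> {x. x a = 0}) + sum ?f (?X - {x. x a = 0})"
    using sum.Int_Diff[OF fX] by blast
  have A: "?X \<inter> {x. x a = 0} = ftup U (Suc n)"
    using fU aU unfolding ftup_def apply (auto simp: sum.insert) by metis
  have A2: "sum ?f (ftup U (Suc n)) = HS U (Suc n) w"
    unfolding HS_def
  proof (rule sum.cong[OF refl])
    fix x assume "x \<in> ftup U (Suc n)"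
    hence "x a = 0" using aU unfolding ftup_def by auto
    thus "?f x = (\<Prod>i\<in>U. w i ^ x i)" using fU aU by simp
  qed
  define g where "g = (\<lambda>y::nat\<Rightarrow>nat. y(a := Suc (y a)))"
  have inj: "inj_on g (ftup (insert a U) n)"
    unfolding g_def inj_on_def
  proof (intro ballI impI)
    fix x y :: "nat \<Rightarrow> nat" assume "x(a := Suc (x a)) = y(a := Suc (y a))"
    hence "\<forall>i. (x(a := Suc (x a))) i = (y(a := Suc (y a))) i" by simp
    hence "\<forall>i. x i = y i" by (metis fun_upd_apply nat.inject)
    thus "x = y" by auto
  qed
  have B: "?X - {x. x a = 0} = g ` ftup (insert a U) n"
  proof (intro set_eqI iffI)
    fix x assume x: "x \<in> ?X - {x. x a = 0}"
    define y where "y = x(a := x a - 1)"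
    have xa: "x a \<noteq> 0" using x by auto
    have "x = g y" using xa unfolding g_def y_def by (auto simp: fun_eq_iff)
    moreover have "y \<in> ftup (insert a U) n"
    proof -
      have "(\<Sum>i\<in>U. y i) = (\<Sum>i\<in>U. x i)" unfolding y_def using aU by (intro sum.cong) auto
      thus ?thesis using x xa fU aU unfolding ftup_def y_def by (auto simp: sum.insert)
    qed
    ultimately show "x \<in> g ` ftup (insert a U) n" by blast
  next
    fix x assume "x \<in> g ` ftup (insert a U) n"
    then obtain y where y: "y \<in> ftup (insert a U) n" "x = g y" by blast
    have "(\<Sum>i\<in>U. x i) = (\<Sum>i\<in>U. y i)" unfolding y(2) g_def using aU by (intro sum.cong) auto
    thus "x \<in> ?X - {x. x a = 0}" using y fU aU unfolding ftup_def g_def by (auto simp: sum.insert)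
  qed
  have B2: "sum ?f (g ` ftup (insert a U) n) = w a * HS (insert a U) n w"
  proof -
    have "sum ?f (g ` ftup (insert a U) n) = sum (?f \<circ> g) (ftup (insert a U) n)"
      by (rule sum.reindex[OF inj])
    also have "\<dots> = (\<Sum>y\<in>ftup (insert a U) n. w a * (\<Prod>i\<in>insert a U. w i ^ y i))"
    proof (rule sum.cong[OF refl])
      fix y
      have e: "(\<Prod>i\<in>U. w i ^ g y i) = (\<Prod>i\<in>U. w i ^ y i)"
        using aU unfolding g_def by (intro prod.cong) auto
      show "(?f \<circ> g) y = w a * (\<Prod>i\<in>insert a U. w i ^ y i)"
        using fU aU e by (simp add: g_def)
    qed
    also have "\<dots> = w a * HS (insert a U) n w" unfolding HS_def by (simp add: sum_distrib_left)
    finally show ?thesis .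
  qed
  show ?thesis unfolding HS_def[of "insert a U" "Suc n"] using split A A2 B B2 by (simp add: HS_def)
qed

lemma HS_single: "HS {a} k w = w a ^ k"
proof (induction k)
  case 0 then show ?case by (simp add: HS_zero)
next
  case (Suc k)
  then show ?case using HS_rec[of "{}" a k w] by (simp add: HS_empty_Suc)
qed

lemma GS_rec:
  assumes fU: "finite U" and aU: "a \<notin> U" and inj: "inj_on w (insert a U)"
  shows "GS (insert a U) (Suc k) w - w a * GS (insert a U) k w = GS U k w"
proof -
  have expand: "GS (insert a U) j w = w a ^ j / (\<Prod>j'\<in>U. (w a - w j'))
      + (\<Sum>l\<in>U. w l ^ j / ((w l - w a) * (\<Prod>j'\<in>U-{l}. (w l - w j'))))" for j
  proof -
    have "GS (insert a U) j w = w a ^ j / (\<Prod>j'\<in>insert a U - {a}. (w a - w j'))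
      + (\<Sum>l\<in>U. w l ^ j / (\<Prod>j'\<in>insert a U - {l}. (w l - w j')))"
      unfolding GS_def using fU aU by simp
    also have "insert a U - {a} = U" using aU by auto
    also have "(\<Sum>l\<in>U. w l ^ j / (\<Prod>j'\<in>insert a U - {l}. (w l - w j')))
       = (\<Sum>l\<in>U. w l ^ j / ((w l - w a) * (\<Prod>j'\<in>U-{l}. (w l - w j'))))"
    proof (rule sum.cong[OF refl])
      fix l assume l: "l \<in> U"
      have "insert a U - {l} = insert a (U - {l})" using l aU by auto
      thus "w l ^ j / (\<Prod>j'\<in>insert a U - {l}. (w l - w j')) = w l ^ j / ((w l - w a) * (\<Prod>j'\<in>U-{l}. (w l - w j')))"
        using fU aU by simp
    qed
    finally show ?thesis .
  qed
  have t: "w l ^ Suc k / ((w l - w a) * P) - w a * (w l ^ k / ((w l - w a) * P)) = w l ^ k / P"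
    if "l \<in> U" for l P
  proof -
    have ne: "w l - w a \<noteq> 0" using inj that aU by (auto simp: inj_on_def)
    have "w l ^ Suc k / ((w l - w a) * P) - w a * (w l ^ k / ((w l - w a) * P))
        = (w l - w a) * w l ^ k / ((w l - w a) * P)"
      by (simp only: times_divide_eq_right diff_divide_distrib[symmetric] left_diff_distrib power_Suc)
    also have "\<dots> = w l ^ k / P" using ne by simp
    finally show ?thesis .
  qed
  have "GS (insert a U) (Suc k) w - w a * GS (insert a U) k w
      = (\<Sum>l\<in>U. w l ^ Suc k / ((w l - w a) * (\<Prod>j'\<in>U-{l}. (w l - w j'))) - w a * (w l ^ k / ((w l - w a) * (\<Prod>j'\<in>U-{l}. (w l - w j')))))"
    unfolding expand by (simp add: sum_subtractf sum_distrib_left field_simps)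
  also have "\<dots> = GS U k w" unfolding GS_def by (rule sum.cong[OF refl]) (rule t)
  finally show ?thesis .
qed



lemma GS_empty: "GS {} k w = 0" unfolding GS_def by simp

lemma GS_HS:
  assumes "finite S" "inj_on w S"
  shows "GS S k w = (if k + 1 < card S then 0 else HS S (k + 1 - card S) w)"
  using assms
proof (induction "card S" arbitrary: S k rule: less_induct)
  case less
  show ?case
  proof (cases "card S \<le> 1")
    case True
    show ?thesis
    proof (cases "card S = 0")
      case True
      hence "S = {}" using less.prems by simp
      thus ?thesis by (simp add: GS_empty HS_empty_Suc)
    next
      case False
      hence "card S = 1" using True by simp
      then obtain a where S: "S = {a}" using card_1_singletonE by blast
      show ?thesis unfolding S by (simp add: GS_def HS_single)
    qed
  next
    case False
    hence c2: "card S \<ge> 2" by simp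
    obtain a b where ab: "a \<in> S" "b \<in> S" "a \<noteq> b"
    proof -
      obtain a where a: "a \<in> S" using c2 by fastforce
      have "card (S - {a}) \<ge> 1" using c2 a less.prems(1) by simp
      then obtain b where "b \<in> S - {a}" by (metis all_not_in_conv card.empty not_one_le_zero)
      thus ?thesis using a that by blast
    qed
    have Sa: "S = insert a (S - {a})" and Sb: "S = insert b (S - {b})" using ab by auto
    have fa: "finite (S - {a})" and fb: "finite (S - {b})" using less.prems by auto
    have ca: "card (S - {a}) = card S - 1" and cb: "card (S - {b}) = card S - 1"
      using ab less.prems by auto
    have ia: "inj_on w (S - {a})" and ib: "inj_on w (S - {b})" using less.prems(2) by (auto intro: inj_on_subset)
    have ra: "GS S (Suc k) w - w a * GS S k w = GS (S - {a}) k w"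
    proof -
      have "GS (insert a (S - {a})) (Suc k) w - w a * GS (insert a (S - {a})) k w = GS (S - {a}) k w"
        by (rule GS_rec[OF fa]) (use less.prems(2) in \<open>simp_all add: insert_absorb[OF ab(1)]\<close>)
      thus ?thesis by (simp add: insert_absorb[OF ab(1)])
    qed
    have rb: "GS S (Suc k) w - w b * GS S k w = GS (S - {b}) k w"
    proof -
      have "GS (insert b (S - {b})) (Suc k) w - w b * GS (insert b (S - {b})) k w = GS (S - {b}) k w"
        by (rule GS_rec[OF fb]) (use less.prems(2) in \<open>simp_all add: insert_absorb[OF ab(2)]\<close>)
      thus ?thesis by (simp add: insert_absorb[OF ab(2)])
    qed
    have wab: "w b - w a \<noteq> 0" using ab less.prems(2) by (auto simp: inj_on_def)
    have G: "GS S k w = (GS (S - {a}) k w - GS (S - {b}) k w) / (w b - w a)"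
      using ra rb wab by (simp add: field_simps)
    have IHa: "GS (S - {a}) k w = (if k + 1 < card S - 1 then 0 else HS (S - {a}) (k + 1 - (card S - 1)) w)"
      using less.hyps[of "S - {a}"] ca c2 fa ia by simp
    have IHb: "GS (S - {b}) k w = (if k + 1 < card S - 1 then 0 else HS (S - {b}) (k + 1 - (card S - 1)) w)"
      using less.hyps[of "S - {b}"] cb c2 fb ib by simp
    show ?thesis
    proof (cases "k + 1 < card S - 1")
      case True
      thus ?thesis using G IHa IHb by simp
    next
      case False
      show ?thesis
      proof (cases "k + 2 = card S")
        case True
        thus ?thesis using G IHa IHb fa fb by (simp add: HS_zero)
      next
        case False2: False
        define n where "n = k + 1 - card S"
        have kn: "k + 1 - (card S - 1) = Suc n" "\<not> k + 1 < card S" using False False2 c2 unfolding n_def by auto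
        have h1: "HS S (Suc n) w = HS (S - {a}) (Suc n) w + w a * HS S n w"
          using HS_rec[OF fa, of a n w] Sa by simp
        have h2: "HS S (Suc n) w = HS (S - {b}) (Suc n) w + w b * HS S n w"
          using HS_rec[OF fb, of b n w] Sb by simp
        have "GS S k w = (HS (S - {a}) (Suc n) w - HS (S - {b}) (Suc n) w) / (w b - w a)"
          using G IHa IHb kn False by simp
        also have "\<dots> = HS S n w" using h1 h2 wab by (simp add: field_simps)
        finally show ?thesis using kn unfolding n_def by simp
      qed
    qed
  qed
qed



lemma sum_pairs: "(\<Sum>i=1..s. s - i) = s choose 2"
proof (induction s)
  case 0 then show ?case by simp
next
  case (Suc s)
  have "(\<Sum>i=1..Suc s. Suc s - i) = (\<Sum>i=1..s. Suc s - i)" by (simp add: sum.atLeast1_atMost_eq)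
  also have "\<dots> = (\<Sum>i=1..s. (s - i) + 1)" by (rule sum.cong) auto
  also have "\<dots> = (\<Sum>i=1..s. s - i) + (\<Sum>i=1..s. (1::nat))" by (rule sum.distrib)
  also have "\<dots> = (s choose 2) + s" using Suc by simp
  also have "\<dots> = Suc s choose 2" by (simp add: numeral_2_eq_2 add.commute)
  finally show ?case .
qed

lemma count_l:
  assumes "l \<in> {1..s}"
  shows "(\<Sum>i=1..s. \<Sum>j\<in>{i<..s}. (if i = l \<or> j = l then 0 else 1::nat)) + (s - 1) = s choose 2"
proof -
  have inner: "(\<Sum>j\<in>{i<..s}. (if i = l \<or> j = l then 1 else 0::nat)) = (if i = l then s - l else if i < l then 1 else 0)" for i
  proof -
    consider "i = l" | "i < l" | "i > l" by linarith
    then show ?thesis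
    proof cases
      case 1 then show ?thesis by simp
    next
      case 2
      hence "(\<Sum>j\<in>{i<..s}. (if i = l \<or> j = l then 1 else 0::nat)) = (\<Sum>j\<in>{i<..s}. (if j = l then 1 else 0::nat))"
        by (intro sum.cong) auto
      also have "\<dots> = 1" using 2 assms by simp
      finally show ?thesis using 2 by simp
    next
      case 3
      hence "(\<Sum>j\<in>{i<..s}. (if i = l \<or> j = l then 1 else 0::nat)) = 0" by (intro sum.neutral) auto
      thus ?thesis using 3 by simp
    qed
  qed
  have outer: "(\<Sum>i=1..s. (if i = l then s - l else if i < l then 1 else 0::nat)) = s - 1"
  proof -
    have "(\<Sum>i=1..s. (if i = l then s - l else if i < l then 1 else 0::nat))
        = (\<Sum>i=1..s. (if i = l then s - l else 0)) + (\<Sum>i=1..s. (if i < l then 1 else 0::nat))"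
      by (subst sum.distrib[symmetric]) (rule sum.cong, auto)
    also have "(\<Sum>i=1..s. (if i = l then s - l else 0)) = s - l" using assms by simp
    also have "(\<Sum>i=1..s. (if i < l then 1 else 0::nat)) = card {i\<in>{1..s}. i < l}"
      by (simp add: sum.inter_filter[symmetric])
    also have "{i\<in>{1..s}. i < l} = {1..<l}" using assms by auto
    finally show ?thesis using assms by simp
  qed
  have "(\<Sum>i=1..s. \<Sum>j\<in>{i<..s}. (if i = l \<or> j = l then 0 else 1::nat))
      + (\<Sum>i=1..s. \<Sum>j\<in>{i<..s}. (if i = l \<or> j = l then 1 else 0::nat))
      = (\<Sum>i=1..s. \<Sum>j\<in>{i<..s}. (1::nat))"
    by (simp add: sum.distrib[symmetric] if_distrib cong: if_cong)
  also have "\<dots> = s choose 2" using sum_pairs[of s] by simp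
  finally show ?thesis using inner outer by simp
qed



definition Dv :: "nat \<Rightarrow> (nat \<Rightarrow> real) \<Rightarrow> real" where
  "Dv s w = (\<Prod>i\<in>{1..s}. \<Prod>j\<in>{i<..s}. w i - w j)"

definition Ql :: "nat \<Rightarrow> nat \<Rightarrow> (nat \<Rightarrow> real) \<Rightarrow> real" where
  "Ql s l w = (\<Prod>i\<in>{1..s}. \<Prod>j\<in>{i<..s}. (if i = l then 1 else if j = l then -1 else w i - w j))"

lemma HP_diff_var:
  assumes "i \<in> {1..s}" "j \<in> {1..s}"
  shows "HP s 1 0 (\<lambda>\<eta> w. w i - w j)"
  using HP_minus[OF HP_var[OF assms(1)] HP_var[OF assms(2)]] .

lemma HP_Dv: "HP s (s choose 2) 0 (\<lambda>\<eta> w. Dv s w)"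
proof -
  have "HP s (\<Sum>i\<in>{1..s}. \<Sum>j\<in>{i<..s}. 1) (\<Sum>i\<in>{1..s}. \<Sum>j\<in>{i<..s}. 0) (\<lambda>\<eta> w. \<Prod>i\<in>{1..s}. \<Prod>j\<in>{i<..s}. w i - w j)"
  proof (rule HP_prod)
    fix i assume i: "i \<in> {1..s}"
    show "HP s (\<Sum>j\<in>{i<..s}. 1) (\<Sum>j\<in>{i<..s}. 0) (\<lambda>\<eta> w. \<Prod>j\<in>{i<..s}. w i - w j)"
    proof (rule HP_prod)
      fix j assume "j \<in> {i<..s}"
      thus "HP s 1 0 (\<lambda>\<eta> w. w i - w j)" using i by (intro HP_diff_var) auto
    qed simp
  qed simp
  moreover have "(\<Sum>i\<in>{1..s}. \<Sum>j\<in>{i<..s}. (1::nat)) = s choose 2" using sum_pairs[of s] by simp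
  ultimately show ?thesis unfolding Dv_def by (rule HP_cong) simp_all
qed

lemma Dv_nonzero:
  assumes inj: "inj_on w {1..s}" shows "Dv s w \<noteq> 0"
proof -
  have ne: "w i - w j \<noteq> 0" if i: "i \<in> {1..s}" and j: "j \<in> {i<..s}" for i j
  proof
    assume "w i - w j = 0"
    hence "w i = w j" by simp
    moreover have "j \<in> {1..s}" using i j by auto
    ultimately have "i = j" using inj i by (meson inj_onD)
    thus False using j by simp
  qed
  have "\<forall>i\<in>{1..s}. (\<Prod>j\<in>{i<..s}. w i - w j) \<noteq> 0"
    using ne by (simp only: prod_zero_iff[OF finite_greaterThanAtMost]) blast
  thus ?thesis by (simp only: Dv_def prod_zero_iff[OF finite_atLeastAtMost]) blast
qed

lemma HP_Ql:
  assumes "l \<in> {1..s}"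
  shows "HP s (\<Sum>i=1..s. \<Sum>j\<in>{i<..s}. (if i = l \<or> j = l then 0 else 1::nat)) 0 (\<lambda>\<eta> w. Ql s l w)"
proof -
  have "HP s (\<Sum>i=1..s. \<Sum>j\<in>{i<..s}. (if i = l \<or> j = l then 0 else 1::nat)) (\<Sum>i\<in>{1..s}. \<Sum>j\<in>{i<..s}. 0)
     (\<lambda>\<eta> w. \<Prod>i\<in>{1..s}. \<Prod>j\<in>{i<..s}. (if i = l then 1 else if j = l then -1 else w i - w j))"
  proof (intro HP_prod)
    fix i j assume i: "i \<in> {1..s}" and j: "j \<in> {i<..s}"
    show "HP s (if i = l \<or> j = l then 0 else 1) 0 (\<lambda>\<eta> w. if i = l then 1 else if j = l then -1 else w i - w j)"
    proof (cases "i = l \<or> j = l")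
      case True
      thus ?thesis using HP_const[of s 1] HP_const[of s "-1"] by (cases "i = l") auto
    next
      case False
      thus ?thesis using HP_diff_var[of i s j] i j by simp
    qed
  qed auto
  thus ?thesis unfolding Ql_def by simp
qed

lemma Dv_split:
  assumes l: "l \<in> {1..s}"
  shows "Dv s w = (\<Prod>j\<in>{1..s}-{l}. w l - w j) * Ql s l w"
proof -
  define k where "k = (\<lambda>i j. if i = l then w l - w j else if j = l then w l - w i else 1)"
  have "Dv s w = (\<Prod>i\<in>{1..s}. \<Prod>j\<in>{i<..s}. (if i = l then 1 else if j = l then -1 else w i - w j) * k i j)"
    unfolding Dv_def k_def by (intro prod.cong refl) auto
  also have "\<dots> = Ql s l w * (\<Prod>i\<in>{1..s}. \<Prod>j\<in>{i<..s}. k i j)"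
    unfolding Ql_def by (simp add: prod.distrib)
  also have "(\<Prod>i\<in>{1..s}. \<Prod>j\<in>{i<..s}. k i j) = (\<Prod>i\<in>{1..s}. (if i = l then (\<Prod>j\<in>{l<..s}. w l - w j) else 1) * (if i < l then w l - w i else 1))"
  proof (rule prod.cong[OF refl])
    fix i assume i: "i \<in> {1..s}"
    consider "i = l" | "i < l" | "i > l" by linarith
    then show "(\<Prod>j\<in>{i<..s}. k i j) = (if i = l then (\<Prod>j\<in>{l<..s}. w l - w j) else 1) * (if i < l then w l - w i else 1)"
    proof cases
      case 1 then show ?thesis unfolding k_def by simp
    next
      case 2
      have "(\<Prod>j\<in>{i<..s}. k i j) = (\<Prod>j\<in>{i<..s}. if j = l then w l - w i else 1)"
        unfolding k_def using 2 by (intro prod.cong) auto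
      also have "\<dots> = w l - w i" using 2 l by simp
      finally show ?thesis using 2 by simp
    next
      case 3
      have "(\<Prod>j\<in>{i<..s}. k i j) = 1" unfolding k_def using 3 by (intro prod.neutral) auto
      thus ?thesis using 3 by simp
    qed
  qed
  also have "\<dots> = (\<Prod>j\<in>{l<..s}. w l - w j) * (\<Prod>i\<in>{1..s}. if i < l then w l - w i else 1)"
    using l by (simp add: prod.distrib)
  also have "(\<Prod>i\<in>{1..s}. if i < l then w l - w i else 1) = (\<Prod>i\<in>{1..<l}. w l - w i)"
  proof -
    have "(\<Prod>i\<in>{1..s}. if i < l then w l - w i else 1) = (\<Prod>i\<in>{i\<in>{1..s}. i < l}. w l - w i)"
      by (rule prod.inter_filter[symmetric]) simp
    also have "{i\<in>{1..s}. i < l} = {1..<l}" using l by auto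
    finally show ?thesis .
  qed
  also have "(\<Prod>j\<in>{l<..s}. w l - w j) * (\<Prod>i\<in>{1..<l}. w l - w i) = (\<Prod>j\<in>{1..s}-{l}. w l - w j)"
  proof -
    have e: "{1..s}-{l} = {1..<l} \<union> {l<..s}" using l by auto
    have "(\<Prod>j\<in>{1..s}-{l}. w l - w j) = (\<Prod>j\<in>{1..<l}. w l - w j) * (\<Prod>j\<in>{l<..s}. w l - w j)"
      unfolding e by (rule prod.union_disjoint) auto
    thus ?thesis by simp
  qed
  finally show ?thesis by simp
qed



lemma comp_HS:
  assumes "s \<le> \<eta>"
  shows "(\<Sum>x\<in>comp_tuples s \<eta>. \<Prod>i=1..s. w i ^ x i) = (\<Prod>i=1..s. w i) * HS {1..s} (\<eta> - s) w"
proof -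
  define f where "f = (\<lambda>(y::nat\<Rightarrow>nat) i. if i \<in> {1..s} then Suc (y i) else 0)"
  have inj: "inj_on f (ftup {1..s} (\<eta> - s))"
  proof (rule inj_onI)
    fix x y assume x: "x \<in> ftup {1..s} (\<eta> - s)" and y: "y \<in> ftup {1..s} (\<eta> - s)" and e: "f x = f y"
    show "x = y"
    proof
      fix i
      show "x i = y i"
      proof (cases "i \<in> {1..s}")
        case True
        have "f x i = f y i" using e by simp
        thus ?thesis using True unfolding f_def by simp
      next
        case False
        thus ?thesis using x y unfolding ftup_def by auto
      qed
    qed
  qed
  have img: "comp_tuples s \<eta> = f ` ftup {1..s} (\<eta> - s)"
  proof (intro set_eqI iffI)
    fix x assume x: "x \<in> comp_tuples s \<eta>"
    define y where "y = (\<lambda>i. if i \<in> {1..s} then x i - 1 else 0)"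
    have "x = f y"
    proof
      fix i show "x i = f y i"
      proof (cases "i \<in> {1..s}")
        case True
        hence "x i \<ge> 1" using x unfolding comp_tuples_def by blast
        thus ?thesis using True unfolding f_def y_def by simp
      next
        case False
        thus ?thesis using x unfolding f_def y_def comp_tuples_def by simp
      qed
    qed
    moreover have "y \<in> ftup {1..s} (\<eta> - s)"
    proof -
      have "(\<Sum>i=1..s. x i) = (\<Sum>i=1..s. y i + 1)"
      proof (rule sum.cong[OF refl])
        fix i assume i: "i \<in> {1..s}"
        hence "x i \<ge> 1" using x unfolding comp_tuples_def by blast
        thus "x i = y i + 1" unfolding y_def using i by simp
      qed
      also have "\<dots> = (\<Sum>i=1..s. y i) + (\<Sum>i=1..s. (1::nat))" by (rule sum.distrib)
      also have "\<dots> = (\<Sum>i=1..s. y i) + s" by simp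
      finally have h: "(\<Sum>i=1..s. x i) = (\<Sum>i=1..s. y i) + s" .
      have "(\<Sum>i=1..s. x i) = \<eta>" using x unfolding comp_tuples_def by blast
      hence "(\<Sum>i=1..s. y i) = \<eta> - s" using h by linarith
      thus ?thesis unfolding ftup_def y_def by auto
    qed
    ultimately show "x \<in> f ` ftup {1..s} (\<eta> - s)" by blast
  next
    fix x assume "x \<in> f ` ftup {1..s} (\<eta> - s)"
    then obtain y where y: "y \<in> ftup {1..s} (\<eta> - s)" "x = f y" by blast
    have "(\<Sum>i=1..s. x i) = (\<Sum>i=1..s. y i + 1)"
      unfolding y(2) f_def by (intro sum.cong) auto
    also have "\<dots> = (\<Sum>i=1..s. y i) + (\<Sum>i=1..s. (1::nat))" by (rule sum.distrib)
    also have "\<dots> = (\<Sum>i=1..s. y i) + s" by simp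
    also have "\<dots> = \<eta>" using y(1) assms unfolding ftup_def by simp
    finally show "x \<in> comp_tuples s \<eta>" unfolding comp_tuples_def y(2) by (auto simp: f_def)
  qed
  have "(\<Sum>x\<in>comp_tuples s \<eta>. \<Prod>i=1..s. w i ^ x i) = (\<Sum>y\<in>ftup {1..s} (\<eta> - s). \<Prod>i=1..s. w i ^ f y i)"
    unfolding img sum.reindex[OF inj] o_def by (rule refl)
  also have "\<dots> = (\<Sum>y\<in>ftup {1..s} (\<eta> - s). (\<Prod>i=1..s. w i) * (\<Prod>i=1..s. w i ^ y i))"
  proof (rule sum.cong[OF refl])
    fix y
    have "(\<Prod>i=1..s. w i ^ f y i) = (\<Prod>i=1..s. w i * w i ^ y i)"
      unfolding f_def by (intro prod.cong) auto
    thus "(\<Prod>i=1..s. w i ^ f y i) = (\<Prod>i=1..s. w i) * (\<Prod>i=1..s. w i ^ y i)" by (simp add: prod.distrib)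
  qed
  also have "\<dots> = (\<Prod>i=1..s. w i) * HS {1..s} (\<eta> - s) w"
    unfolding HS_def by (simp add: sum_distrib_left)
  finally show ?thesis .
qed

lemma base_identity:
  assumes s2: "s \<ge> 2" and es: "s \<le> \<eta>" and inj: "inj_on w {1..s}"
  shows "(\<Sum>x\<in>comp_tuples s \<eta>. \<Prod>i=1..s. w i ^ x i) * Dv s w
       = (\<Sum>l=1..s. w l ^ (\<eta> + 2 - s) * (w l ^ (s - 2) * (\<Prod>i\<in>{1..s}-{l}. w i) * Ql s l w))"
proof -
  have G: "HS {1..s} (\<eta> - s) w = GS {1..s} (\<eta> - 1) w"
    using GS_HS[of "{1..s}" w "\<eta> - 1"] inj s2 es by simp
  have "(\<Sum>x\<in>comp_tuples s \<eta>. \<Prod>i=1..s. w i ^ x i) * Dv s w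
      = (\<Sum>l=1..s. (\<Prod>i=1..s. w i) * (w l ^ (\<eta> - 1) / (\<Prod>j\<in>{1..s}-{l}. w l - w j)) * Dv s w)"
    unfolding comp_HS[OF es] G GS_def by (simp add: sum_distrib_left sum_distrib_right)
  also have "\<dots> = (\<Sum>l=1..s. w l ^ (\<eta> + 2 - s) * (w l ^ (s - 2) * (\<Prod>i\<in>{1..s}-{l}. w i) * Ql s l w))"
  proof (rule sum.cong[OF refl])
    fix l assume l: "l \<in> {1..s}"
    have Dl: "Dv s w = (\<Prod>j\<in>{1..s}-{l}. w l - w j) * Ql s l w" by (rule Dv_split[OF l])
    have Pne: "(\<Prod>j\<in>{1..s}-{l}. w l - w j) \<noteq> 0" using Dv_nonzero[OF inj] Dl by auto
    have Pw: "(\<Prod>i=1..s. w i) = w l * (\<Prod>i\<in>{1..s}-{l}. w i)"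
      by (rule prod.remove) (use l in auto)
    have pw: "w l * w l ^ (\<eta> - 1) = w l ^ (\<eta> + 2 - s) * w l ^ (s - 2)"
    proof -
      have "w l * w l ^ (\<eta> - 1) = w l ^ \<eta>" using es s2 by (cases \<eta>) auto
      moreover have "w l ^ (\<eta> + 2 - s) * w l ^ (s - 2) = w l ^ ((\<eta> + 2 - s) + (s - 2))" by (simp add: power_add)
      moreover have "(\<eta> + 2 - s) + (s - 2) = \<eta>" using es s2 by simp
      ultimately show ?thesis by simp
    qed
    have "(\<Prod>i=1..s. w i) * (w l ^ (\<eta> - 1) / (\<Prod>j\<in>{1..s}-{l}. w l - w j)) * Dv s w
        = (\<Prod>i=1..s. w i) * w l ^ (\<eta> - 1) * Ql s l w"
      unfolding Dl using Pne by simp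
    also have "\<dots> = (w l * w l ^ (\<eta> - 1)) * (\<Prod>i\<in>{1..s}-{l}. w i) * Ql s l w"
      unfolding Pw by (simp add: mult_ac)
    also have "\<dots> = w l ^ (\<eta> + 2 - s) * (w l ^ (s - 2) * (\<Prod>i\<in>{1..s}-{l}. w i) * Ql s l w)"
      unfolding pw by (simp add: mult_ac)
    finally show "(\<Prod>i=1..s. w i) * (w l ^ (\<eta> - 1) / (\<Prod>j\<in>{1..s}-{l}. w l - w j)) * Dv s w
        = w l ^ (\<eta> + 2 - s) * (w l ^ (s - 2) * (\<Prod>i\<in>{1..s}-{l}. w i) * Ql s l w)" .
  qed
  finally show ?thesis .
qed

lemma HP_B:
  assumes l: "l \<in> {1..s}" and s2: "s \<ge> 2"
  shows "HP s ((s choose 2) + s - 2) 0 (\<lambda>\<eta> w. w l ^ (s - 2) * (\<Prod>i\<in>{1..s}-{l}. w i) * Ql s l w)"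
proof -
  have a: "HP s ((s - 2) * 1) ((s-2) * 0) (\<lambda>\<eta> w. w l ^ (s - 2))" by (rule HP_power[OF HP_var[OF l]])
  have b: "HP s (\<Sum>i\<in>{1..s}-{l}. 1) (\<Sum>i\<in>{1..s}-{l}. 0) (\<lambda>\<eta> w. \<Prod>i\<in>{1..s}-{l}. w i)"
  proof (rule HP_prod)
    fix i assume "i \<in> {1..s}-{l}"
    thus "HP s 1 0 (\<lambda>\<eta> w. w i)" by (intro HP_var) auto
  qed simp
  have c: "HP s ((s - 2) * 1 + (\<Sum>i\<in>{1..s}-{l}. 1) + (\<Sum>i=1..s. \<Sum>j\<in>{i<..s}. (if i = l \<or> j = l then 0 else 1::nat)))
     ((s-2) * 0 + (\<Sum>i\<in>{1..s}-{l}. 0) + 0) (\<lambda>\<eta> w. w l ^ (s - 2) * (\<Prod>i\<in>{1..s}-{l}. w i) * Ql s l w)"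
    by (intro HP_mult a b HP_Ql[OF l])
  have "(s - 2) * 1 + (\<Sum>i\<in>{1..s}-{l}. 1) + (\<Sum>i=1..s. \<Sum>j\<in>{i<..s}. (if i = l \<or> j = l then 0 else 1::nat))
        = (s choose 2) + s - 2"
  proof -
    have e1: "(\<Sum>i\<in>{1..s}-{l}. (1::nat)) = s - 1" using l by simp
    have e2: "(\<Sum>i=1..s. \<Sum>j\<in>{i<..s}. (if i = l \<or> j = l then 0 else 1::nat)) + (s - 1) = s choose 2"
      by (rule count_l[OF l])
    define X where "X = (\<Sum>i=1..s. \<Sum>j\<in>{i<..s}. (if i = l \<or> j = l then 0 else 1::nat))"
    define C where "C = s choose 2"
    have "(s-2) + (s-1) + X = C + s - 2" using e2 s2 unfolding X_def[symmetric] C_def[symmetric] by linarith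
    thus ?thesis unfolding mult_1_right e1 X_def C_def .
  qed
  thus ?thesis by (intro HP_cong[OF c]) simp_all
qed



definition LHS :: "nat \<Rightarrow> nat list \<Rightarrow> nat \<Rightarrow> (nat \<Rightarrow> real) \<Rightarrow> real" where
  "LHS s \<alpha> \<eta> w = (\<Sum>x\<in>comp_tuples s \<eta>. (\<Prod>a\<leftarrow>\<alpha>. real (x a)) * (\<Prod>i=1..s. w i ^ x i))"

lemma finite_comp: "finite (comp_tuples s \<eta>)"
proof -
  have "comp_tuples s \<eta> \<subseteq> ftup {1..s} \<eta>" unfolding comp_tuples_def ftup_def by auto
  thus ?thesis using finite_ftup[of "{1..s}" \<eta>] finite_subset by blast
qed

lemma open_U: fixes s a :: nat and w :: "nat \<Rightarrow> real" shows "open (- (w ` ({1..s} - {a}) :: real set))"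
  by (intro open_Compl finite_imp_closed) auto

lemma inj_upd:
  fixes s a :: nat and w :: "nat \<Rightarrow> real"
  assumes inj: "inj_on w {1..s}" and t: "t \<in> - (w ` ({1..s} - {a}))"
  shows "inj_on (w(a:=t)) {1..s}"
proof (rule inj_onI)
  fix i j assume i: "i \<in> {1..s}" and j: "j \<in> {1..s}" and e: "(w(a:=t)) i = (w(a:=t)) j"
  show "i = j"
  proof (cases "i = a"; cases "j = a")
    assume "i = a" "j \<noteq> a" thus ?thesis using e t j by auto
  next
    assume "i \<noteq> a" "j = a" thus ?thesis using e t i by auto
  next
    assume "i \<noteq> a" "j \<noteq> a" thus ?thesis using e inj i j by (auto dest: inj_onD)
  qed simp
qed


lemma step_HP:
  assumes s2: "s \<ge> 2" and a: "a \<in> {1..s}"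
    and HF: "HP s (2^q * (s choose 2) + s - 2) q F"
    and HG: "HP s (2^q * (s choose 2) + s - 2) q G"
    and HDG: "HP s (s choose 2) 0 DG" and dp: "degree p \<le> 1"
  shows "HP s (2^Suc q * (s choose 2) + s - 2) (Suc q)
     (\<lambda>\<eta> w. (poly p \<eta> * F \<eta> w + G \<eta> w) * Dv s w ^ (2^q)
           + (- of_nat (2^q)) * (F \<eta> w * (Dv s w ^ (2^q - 1) * DG \<eta> w)))"
proof -
  define K where "K = (2::nat)^q"
  define C where "C = s choose 2"
  define d where "d = K * C + s - 2"
  have K1: "K \<ge> 1" unfolding K_def by simp
  have dd: "2^Suc q * (s choose 2) + s - 2 = d + K * C" unfolding d_def K_def C_def using s2 by simp
  have KC: "(K - 1) * C + C = K * C" using K1 by (cases K) auto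
  have P: "HP s 0 1 (\<lambda>\<eta> w. poly p \<eta>)" by (rule HP_cong[OF HP_poly[of s p] refl dp])
  have HF': "HP s d q F" using HF unfolding d_def K_def C_def .
  have HG': "HP s d q G" using HG unfolding d_def K_def C_def .
  have PF: "HP s (0 + d) (1 + q) (\<lambda>\<eta> w. poly p \<eta> * F \<eta> w)" by (rule HP_mult[OF P HF'])
  have S1: "HP s d (Suc q) (\<lambda>\<eta> w. poly p \<eta> * F \<eta> w + G \<eta> w)"
    by (rule HP_add) (use PF HG' in \<open>auto elim: HP_cong\<close>)
  have DK: "HP s (K * C) (K * 0) (\<lambda>\<eta> w. Dv s w ^ K)"
    using HP_power[OF HP_Dv[of s], of K] unfolding C_def .
  have X1: "HP s (d + K * C) (Suc q + K * 0) (\<lambda>\<eta> w. (poly p \<eta> * F \<eta> w + G \<eta> w) * Dv s w ^ K)"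
    by (rule HP_mult[OF S1 DK])
  have DK1: "HP s ((K - 1) * C) ((K - 1) * 0) (\<lambda>\<eta> w. Dv s w ^ (K - 1))"
    using HP_power[OF HP_Dv[of s], of "K - 1"] unfolding C_def .
  have Y1: "HP s ((K - 1) * C + C) ((K - 1) * 0 + 0) (\<lambda>\<eta> w. Dv s w ^ (K - 1) * DG \<eta> w)"
    using HP_mult[OF DK1 HDG] unfolding C_def .
  have Y2: "HP s (d + ((K - 1) * C + C)) (q + ((K - 1) * 0 + 0)) (\<lambda>\<eta> w. F \<eta> w * (Dv s w ^ (K - 1) * DG \<eta> w))"
    by (rule HP_mult[OF HF' Y1])
  have Y3: "HP s (0 + (d + ((K - 1) * C + C))) (0 + (q + ((K - 1) * 0 + 0)))
      (\<lambda>\<eta> w. (- of_nat K) * (F \<eta> w * (Dv s w ^ (K - 1) * DG \<eta> w)))"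
    by (rule HP_mult[OF HP_const Y2])
  have "HP s (d + K * C) (Suc q) (\<lambda>\<eta> w. (poly p \<eta> * F \<eta> w + G \<eta> w) * Dv s w ^ K
           + (- of_nat K) * (F \<eta> w * (Dv s w ^ (K - 1) * DG \<eta> w)))"
    by (rule HP_add) (use X1 Y3 KC in \<open>auto elim: HP_cong\<close>)
  thus ?thesis unfolding dd K_def .
qed


lemma step:
  fixes s a :: nat and \<alpha> :: "nat list" and c :: "nat \<Rightarrow> (nat \<Rightarrow> nat) \<Rightarrow> real poly"
  assumes s2: "s \<ge> 2" and a: "a \<in> {1..s}"
    and deg: "\<forall>l m. degree (c l m) \<le> length \<alpha>"
    and IH: "\<forall>\<eta> w. \<eta> \<ge> s \<longrightarrow> inj_on w {1..s} \<longrightarrow> LHS s \<alpha> \<eta> w =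
       (\<Sum>l=1..s. w l ^ (\<eta> + 2 - s) * hom_poly_eval s (2 ^ length \<alpha> * (s choose 2) + s - 2) (c l) (real \<eta>) w)
         / Dv s w ^ (2 ^ length \<alpha>)"
  shows "\<exists>c'. (\<forall>l m. degree (c' l m) \<le> length (a#\<alpha>)) \<and>
    (\<forall>\<eta> w. \<eta> \<ge> s \<longrightarrow> inj_on w {1..s} \<longrightarrow> LHS s (a#\<alpha>) \<eta> w =
       (\<Sum>l=1..s. w l ^ (\<eta> + 2 - s) * hom_poly_eval s (2 ^ length (a#\<alpha>) * (s choose 2) + s - 2) (c' l) (real \<eta>) w)
         / Dv s w ^ (2 ^ length (a#\<alpha>)))"
proof -
  define q where "q = length \<alpha>"
  define K where "K = (2::nat) ^ q"
  define d where "d = 2 ^ q * (s choose 2) + s - 2"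
  define d' where "d' = 2 ^ Suc q * (s choose 2) + s - 2"
  define F where "F l = (\<lambda>\<eta> w. hom_poly_eval s d (c l) \<eta> w)" for l
  define G where "G l = (\<lambda>\<eta> w. hom_poly_eval s d (\<lambda>m. smult (real (m a)) (c l m)) \<eta> w)" for l
  have HF: "HP s d q (F l)" for l
    unfolding HP_def F_def q_def using deg by (intro exI[of _ "c l"]) auto
  have HG: "HP s d q (G l)" for l
  proof -
    have "\<forall>m. degree (smult (real (m a)) (c l m)) \<le> q"
      using deg unfolding q_def by (meson degree_smult_le order_trans)
    thus ?thesis unfolding HP_def G_def by (intro exI[of _ "\<lambda>m. smult (real (m a)) (c l m)"]) simp
  qed
  obtain DG where HDG: "HP s (s choose 2) 0 DG"
    and EDG: "\<forall>\<eta> w t. Eul (\<lambda>t. Dv s (w(a:=t))) t (DG \<eta> (w(a:=t)))"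
    using HP_Euler[OF a HP_Dv[of s]] by blast
  define pl where "pl l = (if l = a then [:2 - real s, 1:] else 0)" for l
  define H where "H l = (\<lambda>\<eta> w. (poly (pl l) \<eta> * F l \<eta> w + G l \<eta> w) * Dv s w ^ K
           + (- of_nat K) * (F l \<eta> w * (Dv s w ^ (K - 1) * DG \<eta> w)))" for l
  have HH: "\<forall>l. HP s d' (Suc q) (H l)"
  proof
    fix l
    have dp: "degree (pl l) \<le> 1" unfolding pl_def by auto
    show "HP s d' (Suc q) (H l)"
      using step_HP[OF s2 a HF[of l, unfolded d_def] HG[of l, unfolded d_def] HDG dp]
      unfolding H_def d'_def K_def .
  qed
  obtain c' where c': "\<forall>l. (\<forall>m. degree (c' l m) \<le> Suc q) \<and> (\<forall>\<eta> w. H l \<eta> w = hom_poly_eval s d' (c' l) \<eta> w)"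
    using choice[OF HH[unfolded HP_def]] by blast
  show ?thesis
  proof (intro exI[of _ c'] conjI allI impI)
    fix l m show "degree (c' l m) \<le> length (a#\<alpha>)" using c' unfolding q_def by simp
  next
    fix \<eta> :: nat and w :: "nat \<Rightarrow> real"
    assume es: "s \<le> \<eta>" and inj: "inj_on w {1..s}"
    define U where "U = - (w ` ({1..s} - {a}))"
    define e where "e = \<eta> + 2 - s"
    define N where "N t = (\<Sum>l=1..s. (w(a:=t)) l ^ e * F l (real \<eta>) (w(a:=t)))" for t
    have t0U: "w a \<in> U" unfolding U_def using inj a by (auto dest: inj_onD)
    have E1: "Eul (\<lambda>t. LHS s \<alpha> \<eta> (w(a:=t))) (w a) (LHS s (a#\<alpha>) \<eta> w)"
    proof (rule Eul_cong[OF Eul_monosum[OF finite_comp a, where k = "\<lambda>x. \<Prod>b\<leftarrow>\<alpha>. real (x b)" and w = w and t = "w a"]])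
      show "\<And>x. (\<Sum>m\<in>comp_tuples s \<eta>. (\<Prod>b\<leftarrow>\<alpha>. real (m b)) * (\<Prod>i = 1..s. (w(a := x)) i ^ m i)) = LHS s \<alpha> \<eta> (w(a := x))"
        unfolding LHS_def ..
      show "(\<Sum>m\<in>comp_tuples s \<eta>. (\<Prod>b\<leftarrow>\<alpha>. real (m b)) * real (m a) * (\<Prod>i = 1..s. (w(a := w a)) i ^ m i)) = LHS s (a # \<alpha>) \<eta> w"
        unfolding LHS_def by (simp add: mult_ac)
    qed
    have EW: "Eul (\<lambda>t. (w(a:=t)) l ^ e) (w a) (if l = a then of_nat e * w l ^ e else 0)" for l
    proof (cases "l = a")
      case True
      thus ?thesis by (intro Eul_cong[OF Eul_id_pow[of e "w a"]]) auto
    next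
      case False
      thus ?thesis by (intro Eul_cong[OF Eul_const[of "w l ^ e" "w a"]]) auto
    qed
    have EF: "Eul (\<lambda>t. F l (real \<eta>) (w(a:=t))) (w a) (G l (real \<eta>) w)" for l
      using Eul_hpe[OF a, of d "c l" "real \<eta>" w "w a"] unfolding F_def G_def by simp
    have EN: "Eul N (w a) (\<Sum>l=1..s. (if l = a then of_nat e * w l ^ e else 0) * F l (real \<eta>) w + w l ^ e * G l (real \<eta>) w)"
      unfolding N_def
      by (rule Eul_sum[OF finite_atLeastAtMost], rule Eul_cong[OF Eul_mult[OF EW EF]]) auto
    have ED: "Eul (\<lambda>t. Dv s (w(a:=t))) (w a) (DG (real \<eta>) w)"
      using EDG[rule_format, of w "w a" "real \<eta>"] by simp
    have EDK: "Eul (\<lambda>t. Dv s (w(a:=t)) ^ K) (w a) (of_nat K * Dv s w ^ (K - 1) * DG (real \<eta>) w)"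
      using Eul_power[OF ED, of K] by simp
    have Dne: "Dv s w ^ K \<noteq> 0" using Dv_nonzero[OF inj] by simp
    have E2: "Eul (\<lambda>t. N t / Dv s (w(a:=t)) ^ K) (w a)
       (((\<Sum>l=1..s. (if l = a then of_nat e * w l ^ e else 0) * F l (real \<eta>) w + w l ^ e * G l (real \<eta>) w) * Dv s w ^ K
         - N (w a) * (of_nat K * Dv s w ^ (K - 1) * DG (real \<eta>) w)) / (Dv s w ^ K * Dv s w ^ K))"
      using Eul_divide[OF EN EDK] Dne by simp
    have eqU: "LHS s \<alpha> \<eta> (w(a:=x)) = N x / Dv s (w(a:=x)) ^ K" if x: "x \<in> U" for x
    proof -
      have "inj_on (w(a:=x)) {1..s}" using inj_upd[OF inj] x unfolding U_def by blast
      thus ?thesis using IH es unfolding N_def F_def K_def d_def q_def e_def by simp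
    qed
    have V: "LHS s (a#\<alpha>) \<eta> w = (((\<Sum>l=1..s. (if l = a then of_nat e * w l ^ e else 0) * F l (real \<eta>) w + w l ^ e * G l (real \<eta>) w) * Dv s w ^ K
         - N (w a) * (of_nat K * Dv s w ^ (K - 1) * DG (real \<eta>) w)) / (Dv s w ^ K * Dv s w ^ K))"
      by (rule Eul_unique[OF E1 E2 _ t0U eqU]) (unfold U_def, rule open_U)
    show "LHS s (a#\<alpha>) \<eta> w =
       (\<Sum>l=1..s. w l ^ (\<eta> + 2 - s) * hom_poly_eval s (2 ^ length (a#\<alpha>) * (s choose 2) + s - 2) (c' l) (real \<eta>) w)
         / Dv s w ^ (2 ^ length (a#\<alpha>))"
    proof -
      have pe: "(if l = a then of_nat e * w l ^ e else 0) = poly (pl l) (real \<eta>) * w l ^ e" for l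
        unfolding pl_def e_def using es by (simp add: of_nat_diff)
      have N0: "N (w a) = (\<Sum>l=1..s. w l ^ e * F l (real \<eta>) w)" unfolding N_def by simp
      have num: "(\<Sum>l=1..s. (if l = a then of_nat e * w l ^ e else 0) * F l (real \<eta>) w + w l ^ e * G l (real \<eta>) w) * Dv s w ^ K
         - N (w a) * (of_nat K * Dv s w ^ (K - 1) * DG (real \<eta>) w)
         = (\<Sum>l=1..s. w l ^ e * H l (real \<eta>) w)"
      proof -
        have "(\<Sum>l=1..s. (if l = a then of_nat e * w l ^ e else 0) * F l (real \<eta>) w + w l ^ e * G l (real \<eta>) w) * Dv s w ^ K
         - N (w a) * (of_nat K * Dv s w ^ (K - 1) * DG (real \<eta>) w)
         = (\<Sum>l=1..s. ((if l = a then of_nat e * w l ^ e else 0) * F l (real \<eta>) w + w l ^ e * G l (real \<eta>) w) * Dv s w ^ K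
             - w l ^ e * F l (real \<eta>) w * (of_nat K * Dv s w ^ (K - 1) * DG (real \<eta>) w))"
          unfolding N0 by (simp add: sum_distrib_right sum_subtractf)
        also have "\<dots> = (\<Sum>l=1..s. w l ^ e * H l (real \<eta>) w)"
        proof (rule sum.cong[OF refl])
          fix l
          show "((if l = a then of_nat e * w l ^ e else 0) * F l (real \<eta>) w + w l ^ e * G l (real \<eta>) w) * Dv s w ^ K
             - w l ^ e * F l (real \<eta>) w * (of_nat K * Dv s w ^ (K - 1) * DG (real \<eta>) w)
             = w l ^ e * H l (real \<eta>) w"
            unfolding pe H_def by (simp add: algebra_simps)
        qed
        finally show ?thesis .
      qed
      have den: "Dv s w ^ K * Dv s w ^ K = Dv s w ^ (2 ^ length (a#\<alpha>))"
        unfolding K_def q_def by (simp add: power_add[symmetric] mult_2)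
      have H': "H l (real \<eta>) w = hom_poly_eval s (2 ^ length (a#\<alpha>) * (s choose 2) + s - 2) (c' l) (real \<eta>) w" for l
        using c' unfolding d'_def q_def by simp
      show ?thesis unfolding V num den H'[symmetric] by (simp add: e_def)
    qed
  qed
qed



lemma main_ind:
  fixes s :: nat and \<alpha> :: "nat list"
  assumes s2: "s \<ge> 2"
  shows "set \<alpha> \<subseteq> {1..s} \<Longrightarrow> \<exists>c :: nat \<Rightarrow> (nat \<Rightarrow> nat) \<Rightarrow> real poly. (\<forall>l m. degree (c l m) \<le> length \<alpha>) \<and>
    (\<forall>\<eta> w. \<eta> \<ge> s \<longrightarrow> inj_on w {1..s} \<longrightarrow> LHS s \<alpha> \<eta> w =
       (\<Sum>l=1..s. w l ^ (\<eta> + 2 - s) * hom_poly_eval s (2 ^ length \<alpha> * (s choose 2) + s - 2) (c l) (real \<eta>) w)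
         / Dv s w ^ (2 ^ length \<alpha>))"
proof (induction \<alpha>)
  case Nil
  define B where "B l = (\<lambda>(\<eta>::real) w. if l \<in> {1..s} then w l ^ (s - 2) * (\<Prod>i\<in>{1..s}-{l}. w i) * Ql s l w else 0)" for l
  have HB: "\<forall>l. HP s ((s choose 2) + s - 2) 0 (B l)"
  proof
    fix l show "HP s ((s choose 2) + s - 2) 0 (B l)"
    proof (cases "l \<in> {1..s}")
      case True
      show ?thesis using HP_B[OF True s2] unfolding B_def using True by simp
    next
      case False
      show ?thesis by (rule HP_ext[OF HP_zero]) (use False in \<open>auto simp: B_def\<close>)
    qed
  qed
  obtain c where c: "\<forall>l. (\<forall>m. degree (c l m) \<le> 0) \<and> (\<forall>\<eta> w. B l \<eta> w = hom_poly_eval s ((s choose 2) + s - 2) (c l) \<eta> w)"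
    using choice[OF HB[unfolded HP_def]] by blast
  show ?case
  proof (intro exI[of _ c] conjI allI impI)
    fix l m show "degree (c l m) \<le> length []" using c by simp
  next
    fix \<eta> :: nat and w :: "nat \<Rightarrow> real"
    assume es: "s \<le> \<eta>" and inj: "inj_on w {1..s}"
    have Dne: "Dv s w \<noteq> 0" by (rule Dv_nonzero[OF inj])
    have "LHS s [] \<eta> w = ((\<Sum>x\<in>comp_tuples s \<eta>. \<Prod>i=1..s. w i ^ x i) * Dv s w) / Dv s w"
      unfolding LHS_def using Dne by simp
    also have "\<dots> = (\<Sum>l=1..s. w l ^ (\<eta> + 2 - s) * (w l ^ (s - 2) * (\<Prod>i\<in>{1..s}-{l}. w i) * Ql s l w)) / Dv s w"
      unfolding base_identity[OF s2 es inj] ..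
    also have "(\<Sum>l=1..s. w l ^ (\<eta> + 2 - s) * (w l ^ (s - 2) * (\<Prod>i\<in>{1..s}-{l}. w i) * Ql s l w))
        = (\<Sum>l=1..s. w l ^ (\<eta> + 2 - s) * hom_poly_eval s (2 ^ length [] * (s choose 2) + s - 2) (c l) (real \<eta>) w)"
    proof (rule sum.cong[OF refl])
      fix l assume l: "l \<in> {1..s}"
      have "hom_poly_eval s (2 ^ length [] * (s choose 2) + s - 2) (c l) (real \<eta>) w = B l (real \<eta>) w"
        using c by simp
      thus "w l ^ (\<eta> + 2 - s) * (w l ^ (s - 2) * (\<Prod>i\<in>{1..s}-{l}. w i) * Ql s l w)
          = w l ^ (\<eta> + 2 - s) * hom_poly_eval s (2 ^ length [] * (s choose 2) + s - 2) (c l) (real \<eta>) w"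
        unfolding B_def using l by simp
    qed
    finally show "LHS s [] \<eta> w = (\<Sum>l=1..s. w l ^ (\<eta> + 2 - s) * hom_poly_eval s (2 ^ length [] * (s choose 2) + s - 2) (c l) (real \<eta>) w)
         / Dv s w ^ (2 ^ length [])" by simp
  qed
next
  case (Cons a \<alpha>)
  hence a: "a \<in> {1..s}" and sub: "set \<alpha> \<subseteq> {1..s}" by auto
  obtain c where "\<forall>l m. degree (c l m) \<le> length \<alpha>"
    "\<forall>\<eta> w. \<eta> \<ge> s \<longrightarrow> inj_on w {1..s} \<longrightarrow> LHS s \<alpha> \<eta> w =
       (\<Sum>l=1..s. w l ^ (\<eta> + 2 - s) * hom_poly_eval s (2 ^ length \<alpha> * (s choose 2) + s - 2) (c l) (real \<eta>) w)
         / Dv s w ^ (2 ^ length \<alpha>)"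
    using Cons.IH[OF sub] by blast
  thus ?case by (rule step[OF s2 a])
qed

theorem lemmaA2:
  fixes s :: nat and \<alpha> :: "nat list"
  assumes "s \<ge> 2" and "set \<alpha> \<subseteq> {1..s}"
  shows "\<exists>c :: nat \<Rightarrow> (nat \<Rightarrow> nat) \<Rightarrow> real poly.
     (\<forall>l m. degree (c l m) \<le> length \<alpha>) \<and>
     (\<forall>(\<eta>::nat) (w::nat \<Rightarrow> real). \<eta> \<ge> s \<longrightarrow> inj_on w {1..s} \<longrightarrow>
        (\<Sum>x\<in>comp_tuples s \<eta>. (\<Prod>a\<leftarrow>\<alpha>. real (x a)) * (\<Prod>i=1..s. w i ^ x i))
        = (\<Sum>l=1..s. w l ^ (\<eta> + 2 - s) *
              hom_poly_eval s (2 ^ length \<alpha> * (s choose 2) + s - 2) (c l) (real \<eta>) w)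
          / (\<Prod>i\<in>{1..s}. \<Prod>j\<in>{i<..s}. w i - w j) ^ (2 ^ length \<alpha>))"
  using main_ind[OF assms] unfolding LHS_def Dv_def .


end
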